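(* Let $d\ge2$, $\tau\in(0,1)$, and let $f_0$ be a bounded probability density on $\mathbb{R}^d$ with two bounded continuous partial derivatives on $\mathbb{R}^d$, such that for some $a>0$ the set $U_a:=\{f_{\tau,0}-a\le f_0\le f_{\tau,0}+a\}$ satisfies $\inf_{U_a}\|\nabla f_0\|>0$ and $U_a\subset\beta_\tau^\delta$ for some $\delta>0$, and $\beta_\tau$ is compact. Let $\tilde f$ be another uniformly continuous probability density on $\mathbb{R}^d$ and $\tilde f_\tau:=f_\tau(\tilde f)$. Then there exists a constant $C_1\ge1$ such that for all $\varepsilon>0$ sufficiently small, $|\tilde f_\tau-f_{\tau,0}|\le C_1\varepsilon$ whenever $\|\tilde f-f_0\|_\infty\le\varepsilon$.
   Context: For a density $f$ on $\mathbb{R}^d$, $f_\tau(f):=\inf\{y\ge0:\int f(\boldsymbol x)\mathbf 1_{\{f(\boldsymbol x)\ge y\}}d\boldsymbol x\le1-\tau\}$, and $f_{\tau,0}:=f_\tau(f_0)$; $\beta_\tau:=\{\boldsymbol x:f_0(\boldsymbol x)=f_{\tau,0}\}$; $A^\delta:=\bigcup_{\boldsymbol x\in A}\{\boldsymbol y:\|\boldsymbol y-\boldsymbol x\|\le\delta\}$; $\|\cdot\|_\infty$ is the sup norm. *)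

theory Defs
  imports "HOL-Analysis.Analysis"
begin

definition prob_density :: "('a::euclidean_space \<Rightarrow> real) \<Rightarrow> bool" where
  "prob_density f \<longleftrightarrow> f \<in> borel_measurable lborel \<and> (\<forall>x. 0 \<le> f x)
     \<and> integrable lborel f \<and> integral\<^sup>L lborel f = 1"

definition level_tau :: "real \<Rightarrow> ('a::euclidean_space \<Rightarrow> real) \<Rightarrow> real" where
  "level_tau \<tau> f = Inf {y. 0 \<le> y \<and>
     integral\<^sup>L lborel (\<lambda>x. f x * indicator {z. y \<le> f z} x) \<le> 1 - \<tau>}"

definition beta_set :: "real \<Rightarrow> ('a::euclidean_space \<Rightarrow> real) \<Rightarrow> 'a set" where
  "beta_set \<tau> f = {x. f x = level_tau \<tau> f}"

definition enlarge :: "'a::metric_space set \<Rightarrow> real \<Rightarrow> 'a set" where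
  "enlarge A \<delta> = (\<Union>x\<in>A. cball x \<delta>)"

definition grad :: "('a::euclidean_space \<Rightarrow> real) \<Rightarrow> 'a \<Rightarrow> 'a" where
  "grad f x = (\<Sum>i\<in>Basis. frechet_derivative f (at x) i *\<^sub>R i)"

definition C2_bounded :: "('a::euclidean_space \<Rightarrow> real) \<Rightarrow> bool" where
  "C2_bounded f \<longleftrightarrow> (\<exists>Df D2f.
     (\<forall>x. (f has_derivative Df x) (at x)) \<and>
     (\<forall>i\<in>Basis. \<forall>x. ((\<lambda>y. Df y i) has_derivative D2f x i) (at x)) \<and>
     (\<forall>i\<in>Basis. continuous_on UNIV (\<lambda>x. Df x i) \<and> bounded (range (\<lambda>x. Df x i))) \<and>
     (\<forall>i\<in>Basis. \<forall>j\<in>Basis. continuous_on UNIV (\<lambda>x. D2f x i j)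
        \<and> bounded (range (\<lambda>x. D2f x i j))))"

end

theory Submission
  imports Defs
begin


lemma slab_translate:
  fixes T Bot S :: "'a::euclidean_space set" and v :: 'a
  assumes T: "T \<in> lmeasurable" and Bot: "Bot \<in> lmeasurable" and S: "S \<in> lmeasurable"
    and sub: "(+) v ` T - T \<subseteq> S" and BT: "Bot \<subseteq> T" and nb: "\<forall>x\<in>Bot. x - v \<notin> T"
  shows "measure lebesgue Bot \<le> measure lebesgue S"
proof -
  let ?T' = "(+) v ` T"
  have T': "?T' \<in> lmeasurable" using measurable_translation[OF T] .
  have mT': "measure lebesgue ?T' = measure lebesgue T" by (rule measure_translation)
  have TB: "T - Bot \<in> lmeasurable" using T Bot by (simp add: fmeasurable_Diff fmeasurableD)
  have "measure lebesgue ?T' - measure lebesgue (T - Bot) \<le> measure lebesgue (?T' - (T - Bot))"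
    by (rule measure_diff_le_measure_setdiff[OF T' TB])
  moreover have "measure lebesgue (?T' - (T - Bot)) = measure lebesgue (?T' - T)"
  proof -
    have "?T' \<inter> Bot = {}"
    proof (safe)
      fix y assume "y \<in> T" "v + y \<in> Bot"
      then show "v + y \<in> {}" using nb by (metis add_diff_cancel_left')
    qed
    then have "?T' - (T - Bot) = ?T' - T" by blast
    then show ?thesis by simp
  qed
  moreover have "measure lebesgue (T - Bot) = measure lebesgue T - measure lebesgue Bot"
    using T Bot BT by (simp add: measurable_measure_Diff fmeasurableD)
  moreover have "measure lebesgue (?T' - T) \<le> measure lebesgue S"
    using sub T' T S by (meson fmeasurableD fmeasurable_Diff measure_mono_fmeasurable)
  ultimately show ?thesis using mT' by linarith
qed



lemma meas_less_leb:
  fixes f :: "'a::euclidean_space \<Rightarrow> real"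
  assumes "continuous_on UNIV f"
  shows "{x. f x < s} \<in> sets lebesgue" "{x. s \<le> f x} \<in> sets lebesgue"
    "{x. f x < s} \<in> sets lborel" "{x. s \<le> f x} \<in> sets lborel"
proof -
  have "f \<in> borel_measurable borel" using assms by (rule borel_measurable_continuous_onI)
  then have "f \<in> borel_measurable lborel" by simp
  then have a: "{x. f x < s} \<in> sets lborel" "{x. s \<le> f x} \<in> sets lborel" by measurable
  then show "{x. f x < s} \<in> sets lebesgue" "{x. s \<le> f x} \<in> sets lebesgue"
    by (simp_all add: sets_completionI_sets)
  show "{x. f x < s} \<in> sets lborel" "{x. s \<le> f x} \<in> sets lborel" using a by auto
qed

lemma mem_cbox_centered:
  fixes x x0 w :: "'a::euclidean_space"
  shows "x \<in> cbox (x0 - w) (x0 + w) \<longleftrightarrow> (\<forall>j\<in>Basis. \<bar>(x - x0) \<bullet> j\<bar> \<le> w \<bullet> j)"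
  by (auto simp: mem_box inner_diff_left inner_add_left abs_le_iff algebra_simps)

lemma slab_box:
  fixes f :: "'a::euclidean_space \<Rightarrow> real" and x0 w i :: 'a
  assumes i: "i \<in> Basis" and sg: "\<sigma> = 1 \<or> \<sigma> = -1"
    and w: "\<forall>j\<in>Basis. w \<bullet> j = (if j = i then r else r')"
    and r: "0 < r" and r': "0 < r'"
    and t: "0 < t" "t \<le> r/2"
    and cont: "continuous_on UNIV f" and L: "\<forall>x y. \<bar>f x - f y\<bar> \<le> L * norm (x - y)"
    and low: "\<forall>x\<in>cbox (x0 - w) (x0 + w). \<sigma> * ((x - x0) \<bullet> i) \<le> -r/2 \<longrightarrow> f x < s"
    and high: "\<forall>x\<in>cbox (x0 - w) (x0 + w). r/2 \<le> \<sigma> * ((x - x0) \<bullet> i) \<longrightarrow> s \<le> f x"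
  shows "t/2 * (2*r')^(DIM('a) - 1)
           \<le> measure lebesgue {x\<in>cbox (x0 - w) (x0 + w). s \<le> f x \<and> f x < s + L*t}"
proof -
  define B0 where "B0 = cbox (x0 - w) (x0 + w)"
  define T where "T = {x\<in>B0. f x < s}"
  define S where "S = {x\<in>B0. s \<le> f x \<and> f x < s + L*t}"
  define v where "v = (\<sigma>*t) *\<^sub>R i"
  define \<alpha> where "\<alpha> = (if \<sigma> = 1 then 0 else 2*r - t/2)"
  define \<beta> where "\<beta> = 2*r - t/2 - \<alpha>"
  define Bot where "Bot = cbox (x0 - w + \<alpha> *\<^sub>R i) (x0 + w - \<beta> *\<^sub>R i)"
  have ss: "\<sigma> * \<sigma> = 1" using sg by auto
  have memB: "x \<in> B0 \<longleftrightarrow> (\<forall>j\<in>Basis. \<bar>(x - x0) \<bullet> j\<bar> \<le> w \<bullet> j)" for x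
    unfolding B0_def by (rule mem_cbox_centered)
  have Tm: "T \<in> lmeasurable"
  proof -
    have "T = B0 \<inter> {x. f x < s}" unfolding T_def by auto
    then show ?thesis unfolding B0_def
      using fmeasurable_Int_fmeasurable[OF lmeasurable_cbox meas_less_leb(1)[OF cont]] by simp
  qed
  have Sm: "S \<in> lmeasurable"
  proof -
    have "S = (B0 \<inter> {x. s \<le> f x}) \<inter> {x. f x < s + L*t}" unfolding S_def by auto
    then show ?thesis unfolding B0_def
      using fmeasurable_Int_fmeasurable[OF fmeasurable_Int_fmeasurable[OF lmeasurable_cbox meas_less_leb(2)[OF cont]] meas_less_leb(1)[OF cont]] by simp
  qed
  have Botm: "Bot \<in> lmeasurable" unfolding Bot_def by simp
  have vi: "(y + v - x0) \<bullet> j = (y - x0) \<bullet> j + (if j = i then \<sigma> * t else 0)" if "j \<in> Basis" for y j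
    using that i by (auto simp: v_def inner_add_left inner_diff_left inner_Basis)
  have nv: "norm v = t" using i t sg by (auto simp: v_def)
  have sub: "(+) v ` T - T \<subseteq> S"
  proof
    fix x assume "x \<in> (+) v ` T - T"
    then obtain y where y: "y \<in> T" and xy: "x = y + v" and xT: "x \<notin> T" by (auto simp: add.commute)
    have yB: "y \<in> B0" and fy: "f y < s" using y by (auto simp: T_def)
    have "\<not> (r/2 \<le> \<sigma> * ((y - x0) \<bullet> i))" using high fy yB unfolding B0_def by force
    moreover have "\<bar>(y - x0) \<bullet> i\<bar> \<le> r" using yB memB i w by force
    ultimately have "\<bar>(x - x0) \<bullet> i\<bar> \<le> r"
      using vi[OF i, of y] xy sg t by (auto simp: abs_le_iff)
    then have xB: "x \<in> B0" using yB memB vi xy w by force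
    then have "s \<le> f x" using xT by (auto simp: T_def)
    moreover have "f x < s + L*t"
      using L[rule_format, of x y] xy nv fy by (auto simp: abs_le_iff)
    ultimately show "x \<in> S" using xB by (auto simp: S_def)
  qed
  have memBot: "x \<in> B0 \<and> \<sigma> * ((x - x0) \<bullet> i) \<le> -r + t/2" if "x \<in> Bot" for x
  proof -
    have *: "\<forall>j\<in>Basis. (x0 - w + \<alpha> *\<^sub>R i) \<bullet> j \<le> x \<bullet> j \<and> x \<bullet> j \<le> (x0 + w - \<beta> *\<^sub>R i) \<bullet> j"
      using that by (simp add: Bot_def mem_box)
    have "\<forall>j\<in>Basis. \<bar>(x - x0) \<bullet> j\<bar> \<le> w \<bullet> j"
    proof
      fix j :: 'a assume j: "j \<in> Basis"
      show "\<bar>(x - x0) \<bullet> j\<bar> \<le> w \<bullet> j"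
        using *[rule_format, OF j] j i t r unfolding \<alpha>_def \<beta>_def
        by (auto simp: inner_add_left inner_diff_left inner_Basis abs_le_iff split: if_splits)
    qed
    moreover have "\<sigma> * ((x - x0) \<bullet> i) \<le> -r + t/2"
      using *[rule_format, OF i] i w sg unfolding \<alpha>_def \<beta>_def
      by (auto simp: inner_add_left inner_diff_left inner_Basis)
    ultimately show ?thesis using memB by blast
  qed
  have BT: "Bot \<subseteq> T"
  proof
    fix x assume "x \<in> Bot"
    with memBot[of x] t have "x \<in> B0" "\<sigma> * ((x - x0) \<bullet> i) \<le> -r/2" by auto
    then show "x \<in> T" using low unfolding T_def B0_def by auto
  qed
  have nb: "\<forall>x\<in>Bot. x - v \<notin> T"
  proof
    fix x assume "x \<in> Bot"
    with memBot[of x] have h: "\<sigma> * ((x - x0) \<bullet> i) \<le> -r + t/2" by auto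
    have "(x - v - x0) \<bullet> i = (x - x0) \<bullet> i - \<sigma> * t"
      using i by (simp add: v_def inner_diff_left)
    then have "\<sigma> * ((x - v - x0) \<bullet> i) < - r" using h ss t
      by (simp add: right_diff_distrib mult.assoc[symmetric])
    then have "\<bar>(x - v - x0) \<bullet> i\<bar> > r" using sg by (auto simp: abs_if split: if_splits)
    then have "x - v \<notin> B0" using memB i w by force
    then show "x - v \<notin> T" by (auto simp: T_def)
  qed
  have "measure lebesgue Bot \<le> measure lebesgue S"
    by (rule slab_translate[OF Tm Botm Sm sub BT nb])
  moreover have "measure lebesgue Bot = t/2 * (2*r')^(DIM('a) - 1)"
  proof -
    have d: "(x0 + w - \<beta> *\<^sub>R i - (x0 - w + \<alpha> *\<^sub>R i)) \<bullet> j = (if j = i then t/2 else 2*r')"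
      if "j \<in> Basis" for j
      using that i w unfolding \<alpha>_def \<beta>_def
      by (auto simp: inner_add_left inner_diff_left inner_Basis)
    have le: "\<forall>j\<in>Basis. (x0 - w + \<alpha> *\<^sub>R i) \<bullet> j \<le> (x0 + w - \<beta> *\<^sub>R i) \<bullet> j"
    proof
      fix j :: 'a assume j: "j \<in> Basis"
      have "0 \<le> (x0 + w - \<beta> *\<^sub>R i - (x0 - w + \<alpha> *\<^sub>R i)) \<bullet> j" using d[OF j] t r' by simp
      then show "(x0 - w + \<alpha> *\<^sub>R i) \<bullet> j \<le> (x0 + w - \<beta> *\<^sub>R i) \<bullet> j"
        by (simp only: inner_diff_left)
    qed
    have "measure lebesgue Bot = (\<Prod>j\<in>Basis. (x0 + w - \<beta> *\<^sub>R i - (x0 - w + \<alpha> *\<^sub>R i)) \<bullet> j)"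
      unfolding Bot_def using le by (subst measure_completion) (auto simp: measure_lborel_cbox_eq)
    also have "\<dots> = (\<Prod>j\<in>Basis. (if j = i then t/2 else 2*r'))"
      using d by (rule prod.cong[OF refl])
    also have "\<dots> = t/2 * (\<Prod>j\<in>Basis - {i}. (if j = i then t/2 else 2*r'))"
      using i by (simp add: prod.remove)
    also have "\<dots> = t/2 * (2*r')^(DIM('a) - 1)"
      using i by (simp add: card_Diff_singleton)
    finally show ?thesis .
  qed
  ultimately show ?thesis unfolding S_def B0_def by simp
qed



definition Gf :: "('a::euclidean_space \<Rightarrow> real) \<Rightarrow> real \<Rightarrow> real" where
  "Gf f y = integral\<^sup>L lborel (\<lambda>x. f x * indicator {z. y \<le> f z} x)"

lemma level_Gf: "level_tau \<tau> f = Inf {y. 0 \<le> y \<and> Gf f y \<le> 1 - \<tau>}"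
  unfolding level_tau_def Gf_def ..

lemma G_int:
  assumes "prob_density f"
  shows "integrable lborel (\<lambda>x. f x * indicator {z. y \<le> f z} x)"
proof -
  have m: "f \<in> borel_measurable lborel" "integrable lborel f" using assms by (auto simp: prob_density_def)
  have "{z. y \<le> f z} \<in> sets lborel" using m(1) by measurable
  then show ?thesis using integrable_real_mult_indicator m(2) by blast
qed

lemma G_mono:
  assumes "prob_density f" "y \<le> y'"
  shows "Gf f y' \<le> Gf f y"
  unfolding Gf_def
proof (rule integral_mono[OF G_int[OF assms(1)] G_int[OF assms(1)]])
  fix x
  have "0 \<le> f x" using assms(1) by (auto simp: prob_density_def)
  then show "f x * indicator {z. y' \<le> f z} x \<le> f x * indicator {z. y \<le> f z} x"
    using assms(2) by (auto simp: indicator_def)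
qed

lemma G_E1:
  assumes f0: "prob_density f0" and ft: "prob_density ft" and e: "\<forall>x. \<bar>ft x - f0 x\<bar> \<le> \<epsilon>"
    and pos: "0 < y + \<epsilon>"
  shows "Gf f0 (y + \<epsilon>) - \<epsilon> / (y + \<epsilon>) \<le> Gf ft y"
proof -
  have i0: "integrable lborel f0" "integral\<^sup>L lborel f0 = 1" and nn: "\<And>x. 0 \<le> f0 x"
    using f0 by (auto simp: prob_density_def)
  have "Gf f0 (y + \<epsilon>) - \<epsilon> / (y + \<epsilon>) =
      integral\<^sup>L lborel (\<lambda>x. f0 x * indicator {z. y + \<epsilon> \<le> f0 z} x - \<epsilon> / (y + \<epsilon>) * f0 x)"
    unfolding Gf_def using G_int[OF f0] i0 by (simp add: integral_diff)
  also have "\<dots> \<le> Gf ft y"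
    unfolding Gf_def
  proof (rule integral_mono)
    show "integrable lborel (\<lambda>x. f0 x * indicator {z. y + \<epsilon> \<le> f0 z} x - \<epsilon> / (y + \<epsilon>) * f0 x)"
      using G_int[OF f0] i0 by auto
    show "integrable lborel (\<lambda>x. ft x * indicator {z. y \<le> ft z} x)" using G_int[OF ft] .
    fix x
    have ex: "\<bar>ft x - f0 x\<bar> \<le> \<epsilon>" using e by auto
    have ft0: "0 \<le> ft x" using ft by (auto simp: prob_density_def)
    show "f0 x * indicator {z. y + \<epsilon> \<le> f0 z} x - \<epsilon> / (y + \<epsilon>) * f0 x \<le> ft x * indicator {z. y \<le> ft z} x"
    proof (cases "y + \<epsilon> \<le> f0 x")
      case True
      have "\<epsilon> \<le> \<epsilon> / (y + \<epsilon>) * f0 x"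
      proof -
        have "0 \<le> \<epsilon>" using ex by linarith
        then have "\<epsilon> * (y + \<epsilon>) \<le> \<epsilon> * f0 x" using True by (simp add: mult_left_mono)
        then show ?thesis using pos by (simp add: field_simps)
      qed
      moreover have "y \<le> ft x" using True ex by (auto simp: abs_le_iff)
      ultimately show ?thesis using True ex by (auto simp: indicator_def abs_le_iff)
    next
      case False
      have "0 \<le> \<epsilon> / (y + \<epsilon>) * f0 x"
        using ex pos nn[of x] by (intro mult_nonneg_nonneg divide_nonneg_pos) auto
      then show ?thesis using False ft0 by (auto simp: indicator_def)
    qed
  qed
  finally show ?thesis .
qed

lemma G_E2:
  assumes f0: "prob_density f0" and ft: "prob_density ft" and e: "\<forall>x. \<bar>ft x - f0 x\<bar> \<le> \<epsilon>"
    and pos: "0 < y - \<epsilon>"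
  shows "Gf ft y \<le> Gf f0 (y - \<epsilon>) + \<epsilon> / (y - \<epsilon>)"
proof -
  have i0: "integrable lborel f0" "integral\<^sup>L lborel f0 = 1" and nn: "\<And>x. 0 \<le> f0 x"
    using f0 by (auto simp: prob_density_def)
  have "Gf ft y \<le>
      integral\<^sup>L lborel (\<lambda>x. f0 x * indicator {z. y - \<epsilon> \<le> f0 z} x + \<epsilon> / (y - \<epsilon>) * f0 x)"
    unfolding Gf_def
  proof (rule integral_mono)
    show "integrable lborel (\<lambda>x. f0 x * indicator {z. y - \<epsilon> \<le> f0 z} x + \<epsilon> / (y - \<epsilon>) * f0 x)"
      using G_int[OF f0] i0 by auto
    show "integrable lborel (\<lambda>x. ft x * indicator {z. y \<le> ft z} x)" using G_int[OF ft] .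
    fix x
    have ex: "\<bar>ft x - f0 x\<bar> \<le> \<epsilon>" using e by auto
    have "0 \<le> \<epsilon>" using ex by linarith
    have c2: "0 \<le> \<epsilon> / (y - \<epsilon>) * f0 x"
      using \<open>0 \<le> \<epsilon>\<close> pos nn[of x] by (intro mult_nonneg_nonneg divide_nonneg_pos) auto
    show "ft x * indicator {z. y \<le> ft z} x \<le> f0 x * indicator {z. y - \<epsilon> \<le> f0 z} x + \<epsilon> / (y - \<epsilon>) * f0 x"
    proof (cases "y \<le> ft x")
      case True
      have f0ge: "y - \<epsilon> \<le> f0 x" using True ex by (auto simp: abs_le_iff)
      have "\<epsilon> \<le> \<epsilon> / (y - \<epsilon>) * f0 x"
      proof -
        have "\<epsilon> * (y - \<epsilon>) \<le> \<epsilon> * f0 x" using f0ge \<open>0 \<le> \<epsilon>\<close> by (simp add: mult_left_mono)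
        then show ?thesis using pos by (simp add: field_simps)
      qed
      then show ?thesis using True f0ge ex by (auto simp: indicator_def abs_le_iff)
    next
      case False
      then show ?thesis using c2 nn[of x] by (auto simp: indicator_def)
    qed
  qed
  also have "\<dots> = Gf f0 (y - \<epsilon>) + \<epsilon> / (y - \<epsilon>)"
    unfolding Gf_def using G_int[OF f0] i0 by (simp add: integral_add)
  finally show ?thesis .
qed

lemma G_slab:
  assumes f0: "prob_density f0" and s: "0 \<le> s" and k: "0 \<le> k" and A: "A \<in> sets lborel" "emeasure lborel A < \<infinity>"
    and sub: "A \<subseteq> {x. s \<le> f0 x \<and> f0 x < s + k}"
  shows "s * measure lborel A \<le> Gf f0 s - Gf f0 (s + k)"
proof -
  have nn: "\<And>x. 0 \<le> f0 x" using f0 by (auto simp: prob_density_def)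
  have iA: "integrable lborel (indicator A :: 'a \<Rightarrow> real)"
    using A by (simp add: integrable_indicator_iff)
  have "s * measure lborel A = integral\<^sup>L lborel (\<lambda>x. s * indicator A x)"
    by simp
  also have "\<dots> \<le> integral\<^sup>L lborel (\<lambda>x. f0 x * indicator {z. s \<le> f0 z} x - f0 x * indicator {z. s + k \<le> f0 z} x)"
  proof (rule integral_mono)
    show "integrable lborel (\<lambda>x. s * indicator A x)" using iA by simp
    show "integrable lborel (\<lambda>x. f0 x * indicator {z. s \<le> f0 z} x - f0 x * indicator {z. s + k \<le> f0 z} x)"
      using G_int[OF f0] by auto
    fix x
    show "s * indicator A x \<le> f0 x * indicator {z. s \<le> f0 z} x - f0 x * indicator {z. s + k \<le> f0 z} x"
    proof (cases "x \<in> A")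
      case True
      then show ?thesis using sub by (auto simp: indicator_def)
    next
      case False
      then show ?thesis using nn[of x] k by (auto simp: indicator_def)
    qed
  qed
  also have "\<dots> = Gf f0 s - Gf f0 (s + k)"
    unfolding Gf_def using G_int[OF f0] by (simp add: integral_diff)
  finally show ?thesis .
qed



lemma lin_expand:
  fixes g :: "'a::euclidean_space \<Rightarrow> real"
  assumes "linear g"
  shows "g h = (\<Sum>j\<in>Basis. (h \<bullet> j) * g j)"
proof -
  have "g h = g (\<Sum>j\<in>Basis. (h \<bullet> j) *\<^sub>R j)" by (simp add: euclidean_representation)
  also have "\<dots> = (\<Sum>j\<in>Basis. g ((h \<bullet> j) *\<^sub>R j))" by (rule linear_sum[OF assms])
  also have "\<dots> = (\<Sum>j\<in>Basis. (h \<bullet> j) * g j)" using linear_scale[OF assms] by simp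
  finally show ?thesis .
qed

lemma lipschitz_from_partials:
  fixes f :: "'a::euclidean_space \<Rightarrow> real" and M :: real
  assumes der: "\<forall>x. (f has_derivative Df x) (at x)" and M: "\<forall>j\<in>Basis. \<forall>x. \<bar>Df x j\<bar> \<le> M"
  shows "\<bar>f x - f y\<bar> \<le> (real DIM('a) * M) * norm (x - y)"
proof -
  have "norm (f x - f y) \<le> (real DIM('a) * M) * norm (x - y)"
  proof (rule differentiable_bound[of UNIV f Df])
    show "convex (UNIV :: 'a set)" by simp
    fix z :: 'a
    show "(f has_derivative Df z) (at z within UNIV)" using der by simp
    have lin: "linear (Df z)" using der has_derivative_linear by blast
    show "onorm (Df z) \<le> real DIM('a) * M"
    proof (rule onorm_le)
      fix h :: 'a
      have e: "Df z h = (\<Sum>j\<in>Basis. (h \<bullet> j) * Df z j)" by (rule lin_expand[OF lin])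
      have "norm (Df z h) = \<bar>\<Sum>j\<in>Basis. (h \<bullet> j) * Df z j\<bar>" unfolding e by simp
      also have "\<dots> \<le> (\<Sum>j\<in>Basis. \<bar>(h \<bullet> j) * Df z j\<bar>)" by (rule sum_abs)
      also have "\<dots> \<le> (\<Sum>j\<in>(Basis::'a set). norm h * M)"
      proof (intro sum_mono)
        fix j :: 'a assume j: "j \<in> Basis"
        have "\<bar>h \<bullet> j\<bar> \<le> norm h" using j by (rule Basis_le_norm)
        moreover have "\<bar>Df z j\<bar> \<le> M" using M j by auto
        ultimately show "\<bar>(h \<bullet> j) * Df z j\<bar> \<le> norm h * M"
          by (simp add: abs_mult mult_mono)
      qed
      also have "\<dots> = real DIM('a) * M * norm h" by simp
      finally show "norm (Df z h) \<le> real DIM('a) * M * norm h" .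
    qed
  qed auto
  then show ?thesis by simp
qed

lemma line_mono:
  fixes f :: "'a::euclidean_space \<Rightarrow> real"
  assumes der: "\<forall>x. (f has_derivative Df x) (at x)" and ab: "a \<le> b"
    and pos: "\<forall>t\<in>{a..b}. q2 \<le> \<sigma> * Df (y + t *\<^sub>R i) i"
  shows "q2 * (b - a) \<le> \<sigma> * f (y + b *\<^sub>R i) - \<sigma> * f (y + a *\<^sub>R i)"
proof -
  define g where "g t = \<sigma> * f (y + t *\<^sub>R i) - q2 * t" for t
  have "g a \<le> g b"
  proof (rule DERIV_nonneg_imp_nondecreasing[OF ab])
    fix t assume t: "a \<le> t" "t \<le> b"
    have lin: "linear (Df (y + t *\<^sub>R i))" using der has_derivative_linear by blast
    have d1: "((\<lambda>t. y + t *\<^sub>R i) has_derivative (\<lambda>h. h *\<^sub>R i)) (at t)"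
      by (auto intro!: derivative_eq_intros)
    have d2: "((\<lambda>t. f (y + t *\<^sub>R i)) has_derivative (\<lambda>h. Df (y + t *\<^sub>R i) (h *\<^sub>R i))) (at t)"
      using has_derivative_compose[OF d1 der[rule_format, of "y + t *\<^sub>R i"]] by (simp add: o_def)
    have eq: "(\<lambda>h. Df (y + t *\<^sub>R i) (h *\<^sub>R i)) = (*) (Df (y + t *\<^sub>R i) i)"
      using linear_scale[OF lin] by (auto simp: fun_eq_iff)
    have "((\<lambda>t. f (y + t *\<^sub>R i)) has_field_derivative Df (y + t *\<^sub>R i) i) (at t)"
      using d2 unfolding has_field_derivative_def eq .
    then have "(g has_field_derivative (\<sigma> * Df (y + t *\<^sub>R i) i - q2)) (at t)"
      unfolding g_def by (auto intro!: derivative_eq_intros)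
    moreover have "0 \<le> \<sigma> * Df (y + t *\<^sub>R i) i - q2" using pos t by auto
    ultimately show "\<exists>D. (g has_real_derivative D) (at t) \<and> 0 \<le> D" by blast
  qed
  then show ?thesis unfolding g_def by (simp add: algebra_simps)
qed



theorem lemmaA1:
  fixes f0 :: "'a::euclidean_space \<Rightarrow> real" and \<tau> :: real
  assumes dim: "DIM('a) \<ge> 2"
    and tau: "0 < \<tau>" "\<tau> < 1"
    and dens0: "prob_density f0"
    and bdd0: "bounded (range f0)"
    and C2: "C2_bounded f0"
    and Ua: "\<exists>a>0. (\<exists>c>0. \<forall>x\<in>{x. level_tau \<tau> f0 - a \<le> f0 x \<and> f0 x \<le> level_tau \<tau> f0 + a}.
                   c \<le> norm (grad f0 x))
               \<and> (\<exists>\<delta>>0. {x. level_tau \<tau> f0 - a \<le> f0 x \<and> f0 x \<le> level_tau \<tau> f0 + a}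
                          \<subseteq> enlarge (beta_set \<tau> f0) \<delta>)"
    and cpt: "compact (beta_set \<tau> f0)"
  shows "\<exists>C1\<ge>1. \<exists>\<epsilon>0>0. \<forall>\<epsilon>. 0 < \<epsilon> \<and> \<epsilon> < \<epsilon>0 \<longrightarrow>
           (\<forall>ft :: 'a \<Rightarrow> real. prob_density ft \<and> uniformly_continuous_on UNIV ft
              \<and> (\<forall>x. \<bar>ft x - f0 x\<bar> \<le> \<epsilon>)
              \<longrightarrow> \<bar>level_tau \<tau> ft - level_tau \<tau> f0\<bar> \<le> C1 * \<epsilon>)"
proof -
  define c where "c = level_tau \<tau> f0"
  define S0 where "S0 = {y. 0 \<le> y \<and> Gf f0 y \<le> 1 - \<tau>}"
  have cS0: "c = Inf S0" unfolding c_def S0_def level_Gf ..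
  have nn0: "\<And>x. 0 \<le> f0 x" and int0: "integrable lborel f0" and one0: "integral\<^sup>L lborel f0 = 1"
    using dens0 by (auto simp: prob_density_def)
  obtain Df D2f where der: "\<forall>x. (f0 has_derivative Df x) (at x)"
    and Dcont: "\<forall>i\<in>Basis. continuous_on UNIV (\<lambda>x. Df x i) \<and> bounded (range (\<lambda>x. Df x i))"
    using C2 unfolding C2_bounded_def by blast
  have cont0: "continuous_on UNIV f0"
    using der by (meson continuous_at_imp_continuous_on has_derivative_continuous)
  obtain M0 where M0: "\<forall>x. \<bar>f0 x\<bar> \<le> M0" using bdd0 by (auto simp: bounded_iff)
  have G0zero: "Gf f0 y = 0" if "M0 < y" for y
  proof -
    have "(\<lambda>x. f0 x * indicator {z. y \<le> f0 z} x) = (\<lambda>x. 0)"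
    proof (rule ext)
      fix x
      have "f0 x < y" using M0[rule_format, of x] that by linarith
      then show "f0 x * indicator {z. y \<le> f0 z} x = 0" by (simp add: indicator_def)
    qed
    then show ?thesis unfolding Gf_def by simp
  qed
  have S0ne: "M0 + 1 \<in> S0"
  proof -
    have "0 \<le> M0" using M0 by (meson abs_ge_zero order_trans)
    then show ?thesis using G0zero[of "M0+1"] tau by (auto simp: S0_def)
  qed
  have bdd: "bdd_below S0" unfolding S0_def by (rule bdd_belowI[of _ 0]) auto
  have c0: "0 \<le> c" unfolding cS0 using S0ne by (intro cInf_greatest) (auto simp: S0_def)
  have P1: "1 - \<tau> < Gf f0 y" if "0 \<le> y" "y < c" for y
  proof (rule ccontr)
    assume "\<not> 1 - \<tau> < Gf f0 y"
    then have "y \<in> S0" using that by (auto simp: S0_def)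
    then have "c \<le> y" unfolding cS0 by (rule cInf_lower[OF _ bdd])
    with that show False by simp
  qed
  have P2: "Gf f0 y \<le> 1 - \<tau>" if "c < y" for y
  proof -
    have "S0 \<noteq> {}" using S0ne by auto
    then have "\<exists>y'\<in>S0. y' < y" using cInf_less_iff[of S0 y] bdd that cS0 by simp
    then obtain y' where "y' \<in> S0" "y' < y" by blast
    then show ?thesis using G_mono[OF dens0, of y' y] by (auto simp: S0_def)
  qed
  obtain a cg \<delta> where a: "a > 0" and cg: "cg > 0"
    and gradU: "\<forall>x. c - a \<le> f0 x \<and> f0 x \<le> c + a \<longrightarrow> cg \<le> norm (grad f0 x)"
    and Usub: "{x. c - a \<le> f0 x \<and> f0 x \<le> c + a} \<subseteq> enlarge (beta_set \<tau> f0) \<delta>"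
    using Ua unfolding c_def by force
  have ex1: "\<exists>x1. c - a \<le> f0 x1"
  proof (rule ccontr)
    assume "\<not> ?thesis"
    then have lt: "\<forall>x. f0 x < c - a" by (meson not_le)
    have ca: "0 \<le> c - a" using lt nn0[of 0] by (meson less_eq_real_def order_trans)
    have "(\<lambda>x. f0 x * indicator {z. c - a \<le> f0 z} x) = (\<lambda>x. 0)"
    proof (rule ext)
      fix x
      have "f0 x < c - a" using lt by blast
      then show "f0 x * indicator {z. c - a \<le> f0 z} x = 0" by (simp add: indicator_def)
    qed
    then have "Gf f0 (c - a) = 0" unfolding Gf_def by simp
    then have "c - a \<in> S0" using ca tau by (auto simp: S0_def)
    then have "c \<le> c - a" unfolding cS0 by (rule cInf_lower[OF _ bdd])
    with a show False by simp
  qed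
  have ex2: "\<exists>x2. f0 x2 \<le> c + a"
  proof (rule ccontr)
    assume "\<not> ?thesis"
    then have gt: "\<forall>x. c + a < f0 x" by (meson not_le)
    have "(\<lambda>x. f0 x * indicator {z. c + a \<le> f0 z} x) = f0"
    proof (rule ext)
      fix x
      have "c + a < f0 x" using gt by blast
      then show "f0 x * indicator {z. c + a \<le> f0 z} x = f0 x" by (simp add: indicator_def)
    qed
    then have "Gf f0 (c + a) = 1" unfolding Gf_def using one0 by simp
    moreover have "Gf f0 (c + a) \<le> 1 - \<tau>" using P2 a by simp
    ultimately show False using tau by simp
  qed
  obtain x3 where x3: "c - a \<le> f0 x3 \<and> f0 x3 \<le> c + a"
  proof -
    from ex1 ex2 obtain x1 x2 where x1: "c - a \<le> f0 x1" and x2: "f0 x2 \<le> c + a" by blast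
    show ?thesis
    proof (cases "f0 x1 \<le> c + a")
      case True
      then show ?thesis using that x1 by blast
    next
      case False
      have conn: "connected (range f0)" using connected_continuous_image[OF cont0 connected_UNIV] .
      have "c + a \<in> range f0"
        using connected_iff_interval[THEN iffD1, OF conn, rule_format, of "f0 x2" "f0 x1" "c + a"] x2 False
        by auto
      then obtain x where fx: "f0 x = c + a" by auto
      have "c - a \<le> f0 x \<and> f0 x \<le> c + a" using fx a by simp
      then show ?thesis by (rule that)
    qed
  qed
  have "x3 \<in> enlarge (beta_set \<tau> f0) \<delta>" using Usub x3 by auto
  then obtain x0 where x0b: "x0 \<in> beta_set \<tau> f0" unfolding enlarge_def by auto
  then have fx0: "f0 x0 = c" by (simp add: beta_set_def c_def)
  have gx0: "cg \<le> norm (grad f0 x0)" using gradU fx0 a by auto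
  have gradeq: "grad f0 x0 = (\<Sum>i\<in>Basis. Df x0 i *\<^sub>R i)"
    unfolding grad_def using frechet_derivative_at[OF der[rule_format, of x0]] by simp
  have cpos: "0 < c"
  proof (rule ccontr)
    assume "\<not> 0 < c"
    then have "c = 0" using c0 by simp
    then have "\<forall>y\<in>UNIV. f0 x0 \<le> f0 y" using fx0 nn0 by auto
    then have "Df x0 = (\<lambda>v. 0)"
      using differential_zero_maxmin[of x0 UNIV f0 "Df x0"] der by auto
    then have "grad f0 x0 = 0" using gradeq by simp
    with gx0 cg show False by simp
  qed
  have "\<exists>i\<in>Basis. Df x0 i \<noteq> 0"
  proof (rule ccontr)
    assume "\<not> ?thesis"
    then have "grad f0 x0 = 0" using gradeq by simp
    with gx0 cg show False by simp
  qed
  then obtain i where i: "i \<in> Basis" and p0: "Df x0 i \<noteq> 0" by blast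
  define p where "p = Df x0 i"
  define q where "q = \<bar>p\<bar>"
  define \<sigma> where "\<sigma> = (if 0 < p then 1 else -1::real)"
  have qpos: "0 < q" using p0 by (simp add: q_def p_def)
  have sg: "\<sigma> = 1 \<or> \<sigma> = -1" by (simp add: \<sigma>_def)
  have sp: "\<sigma> * p = q" using p0 by (auto simp: \<sigma>_def q_def p_def)
  have "continuous (at x0) (\<lambda>x. Df x i)"
    using Dcont i continuous_on_eq_continuous_at open_UNIV by blast
  then obtain \<rho> where \<rho>: "\<rho> > 0" and \<rho>c: "\<forall>z. dist z x0 < \<rho> \<longrightarrow> \<bar>Df z i - p\<bar> < q/2"
  proof -
    have "\<exists>\<delta>>0. \<forall>x'. dist x' x0 < \<delta> \<longrightarrow> dist (Df x' i) (Df x0 i) < q/2"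
    proof -
      have h: "\<forall>e>0. \<exists>\<delta>>0. \<forall>x'. dist x' x0 < \<delta> \<longrightarrow> dist (Df x' i) (Df x0 i) < e"
        using \<open>continuous (at x0) (\<lambda>x. Df x i)\<close> unfolding continuous_at_eps_delta .
      have "0 < q/2" using qpos by simp
      then show ?thesis using h by blast
    qed
    then show ?thesis using that by (auto simp: dist_real_def p_def)
  qed
  have sDf: "q/2 \<le> \<sigma> * Df z i" if "dist z x0 < \<rho>" for z
  proof -
    have "\<bar>Df z i - p\<bar> < q/2" using \<rho>c that by auto
    then have b: "-(q/2) < Df z i - p \<and> Df z i - p < q/2" by (smt (verit))
    show ?thesis
    proof (cases "\<sigma> = 1")
      case True
      then show ?thesis using b sp by simp
    next
      case False
      then have "\<sigma> = -1" using sg by simp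
      then show ?thesis using b sp by simp
    qed
  qed
  obtain M where M: "\<forall>j\<in>Basis. \<forall>x. \<bar>Df x j\<bar> \<le> M"
  proof -
    have "\<forall>j\<in>Basis. \<exists>m. \<forall>x. \<bar>Df x j\<bar> \<le> m" using Dcont by (auto simp: bounded_iff)
    then obtain mf where mf: "\<forall>j\<in>Basis. \<forall>x. \<bar>Df x j\<bar> \<le> mf j" by metis
    have "\<forall>j\<in>Basis. \<forall>x. \<bar>Df x j\<bar> \<le> (\<Sum>k\<in>Basis. \<bar>mf k\<bar>)"
    proof (intro ballI allI)
      fix j x assume j: "j \<in> (Basis :: 'a set)"
      have "mf j \<le> \<bar>mf j\<bar>" by simp
      also have "\<dots> \<le> (\<Sum>k\<in>Basis. \<bar>mf k\<bar>)" using j by (intro member_le_sum) auto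
      finally have m1: "mf j \<le> (\<Sum>k\<in>Basis. \<bar>mf k\<bar>)" .
      have "\<bar>Df x j\<bar> \<le> mf j" using mf j by blast
      then show "\<bar>Df x j\<bar> \<le> (\<Sum>k\<in>Basis. \<bar>mf k\<bar>)" using m1 by linarith
    qed
    then show ?thesis using that by blast
  qed
  define d where "d = real DIM('a)"
  have d1: "1 \<le> d" by (simp add: d_def DIM_positive Suc_leI)
  define L where "L = d * \<bar>M\<bar> + 1"
  have dM: "0 \<le> d * \<bar>M\<bar>" using d1 by simp
  have Lpos: "0 < L" using dM by (simp add: L_def)
  have dML: "d * M \<le> L"
  proof -
    have "d * M \<le> d * \<bar>M\<bar>" using d1 by (intro mult_left_mono) auto
    then show ?thesis by (simp add: L_def)
  qed
  have Lip: "\<forall>x y. \<bar>f0 x - f0 y\<bar> \<le> L * norm (x - y)"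
  proof (intro allI)
    fix x y
    have "\<bar>f0 x - f0 y\<bar> \<le> (d * M) * norm (x - y)"
      using lipschitz_from_partials[OF der M] by (simp add: d_def)
    also have "\<dots> \<le> L * norm (x - y)"
      using dML by (intro mult_right_mono) auto
    finally show "\<bar>f0 x - f0 y\<bar> \<le> L * norm (x - y)" .
  qed
  define r where "r = \<rho> / (2*d)"
  have rpos: "0 < r" using \<rho> d1 by (simp add: r_def)
  define r' where "r' = min r (q*r/(8*L*d))"
  have r'pos: "0 < r'" using rpos qpos Lpos d1 by (simp add: r'_def)
  have r'r: "r' \<le> r" by (simp add: r'_def)
  have r'q: "L * d * r' \<le> q*r/8"
  proof -
    have "L * d * r' \<le> L * d * (q*r/(8*L*d))"
      using Lpos d1 by (intro mult_left_mono) (auto simp: r'_def)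
    also have "\<dots> = q*r/8" using Lpos d1 by (simp add: field_simps)
    finally show ?thesis .
  qed
  define w where "w = (\<Sum>k\<in>Basis. (if k = i then r else r') *\<^sub>R k)"
  have w: "\<forall>j\<in>Basis. w \<bullet> j = (if j = i then r else r')"
  proof
    fix j :: 'a assume j: "j \<in> Basis"
    have "w \<bullet> j = (\<Sum>k\<in>Basis. (if k = i then r else r') * (k \<bullet> j))"
      by (simp add: w_def inner_sum_left)
    also have "\<dots> = (\<Sum>k\<in>Basis. if k = j then (if k = i then r else r') else 0)"
      by (rule sum.cong) (auto simp: inner_Basis j)
    also have "\<dots> = (if j = i then r else r')" using j by simp
    finally show "w \<bullet> j = (if j = i then r else r')" .
  qed
  have wle: "w \<bullet> j \<le> r" if "j \<in> Basis" for j using w that r'r by auto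
  define B0 where "B0 = cbox (x0 - w) (x0 + w)"
  have memB: "x \<in> B0 \<longleftrightarrow> (\<forall>j\<in>Basis. \<bar>(x - x0) \<bullet> j\<bar> \<le> w \<bullet> j)" for x
    unfolding B0_def by (rule mem_cbox_centered)
  have inball: "dist z x0 < \<rho>" if "z \<in> B0" for z
  proof -
    have zb: "\<forall>j\<in>Basis. \<bar>(z - x0) \<bullet> j\<bar> \<le> w \<bullet> j" using memB that by blast
    have "norm (z - x0) \<le> (\<Sum>j\<in>Basis. \<bar>(z - x0) \<bullet> j\<bar>)" by (rule norm_le_l1)
    also have "\<dots> \<le> (\<Sum>j\<in>(Basis::'a set). r)"
    proof (intro sum_mono)
      fix j :: 'a assume j: "j \<in> Basis"
      have "\<bar>(z - x0) \<bullet> j\<bar> \<le> w \<bullet> j" using zb j by blast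
      then show "\<bar>(z - x0) \<bullet> j\<bar> \<le> r" using wle[OF j] by linarith
    qed
    also have "\<dots> = d * r" by (simp add: d_def)
    also have "\<dots> < \<rho>" using \<rho> d1 by (simp add: r_def)
    finally show ?thesis by (simp add: dist_norm)
  qed
  have yclose: "\<bar>f0 (x - ((x - x0) \<bullet> i) *\<^sub>R i) - c\<bar> \<le> q*r/8" if "x \<in> B0" for x
  proof -
    let ?y = "x - ((x - x0) \<bullet> i) *\<^sub>R i"
    have xb: "\<forall>j\<in>Basis. \<bar>(x - x0) \<bullet> j\<bar> \<le> w \<bullet> j" using memB that by blast
    have "norm (?y - x0) \<le> (\<Sum>j\<in>Basis. \<bar>(?y - x0) \<bullet> j\<bar>)" by (rule norm_le_l1)
    also have "\<dots> \<le> (\<Sum>j\<in>(Basis::'a set). r')"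
    proof (intro sum_mono)
      fix j :: 'a assume j: "j \<in> Basis"
      have e: "(?y - x0) \<bullet> j = (if j = i then 0 else (x - x0) \<bullet> j)"
        using i j by (auto simp: inner_diff_left inner_Basis)
      show "\<bar>(?y - x0) \<bullet> j\<bar> \<le> r'"
      proof (cases "j = i")
        case True
        then show ?thesis using e r'pos by simp
      next
        case False
        have "\<bar>(x - x0) \<bullet> j\<bar> \<le> w \<bullet> j" using xb j by blast
        then show ?thesis using e False w j by simp
      qed
    qed
    also have "\<dots> = d * r'" by (simp add: d_def)
    finally have "norm (?y - x0) \<le> d * r'" .
    then have "L * norm (?y - x0) \<le> L * (d * r')" using Lpos by (intro mult_left_mono) auto
    moreover have "\<bar>f0 ?y - f0 x0\<bar> \<le> L * norm (?y - x0)" using Lip by blast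
    moreover have "L * (d * r') = L * d * r'" by simp
    ultimately show ?thesis using fx0 r'q by linarith
  qed
  have lineB: "x - ((x - x0) \<bullet> i) *\<^sub>R i + t *\<^sub>R i \<in> B0" if "x \<in> B0" "\<bar>t\<bar> \<le> r" for x t
  proof -
    have xb: "\<forall>j\<in>Basis. \<bar>(x - x0) \<bullet> j\<bar> \<le> w \<bullet> j" using memB that(1) by blast
    have "\<forall>j\<in>Basis. \<bar>(x - ((x - x0) \<bullet> i) *\<^sub>R i + t *\<^sub>R i - x0) \<bullet> j\<bar> \<le> w \<bullet> j"
    proof
      fix j :: 'a assume j: "j \<in> Basis"
      have e: "(x - ((x - x0) \<bullet> i) *\<^sub>R i + t *\<^sub>R i - x0) \<bullet> j = (if j = i then t else (x - x0) \<bullet> j)"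
        using i j by (auto simp: inner_diff_left inner_add_left inner_Basis)
      show "\<bar>(x - ((x - x0) \<bullet> i) *\<^sub>R i + t *\<^sub>R i - x0) \<bullet> j\<bar> \<le> w \<bullet> j"
      proof (cases "j = i")
        case True
        then show ?thesis using e that(2) w i by simp
      next
        case False
        have "\<bar>(x - x0) \<bullet> j\<bar> \<le> w \<bullet> j" using xb j by blast
        then show ?thesis using e False by simp
      qed
    qed
    then show ?thesis using memB by blast
  qed
  have mono_x: "(0 \<le> (x - x0) \<bullet> i \<and> (q/2) * \<bar>(x - x0) \<bullet> i\<bar> \<le> \<sigma> * f0 x - \<sigma> * f0 (x - ((x - x0) \<bullet> i) *\<^sub>R i))
    \<or> ((x - x0) \<bullet> i \<le> 0 \<and> (q/2) * \<bar>(x - x0) \<bullet> i\<bar> \<le> \<sigma> * f0 (x - ((x - x0) \<bullet> i) *\<^sub>R i) - \<sigma> * f0 x)"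
    if xB: "x \<in> B0" for x
  proof -
    define a where "a = (x - x0) \<bullet> i"
    define y where "y = x - a *\<^sub>R i"
    have xb: "\<forall>j\<in>Basis. \<bar>(x - x0) \<bullet> j\<bar> \<le> w \<bullet> j" using memB xB by blast
    have ar: "\<bar>a\<bar> \<le> r" using xb i w unfolding a_def by auto
    have yx: "y + a *\<^sub>R i = x" "y + 0 *\<^sub>R i = y" by (simp_all add: y_def)
    have pos: "\<forall>t\<in>{lo..hi}. q/2 \<le> \<sigma> * Df (y + t *\<^sub>R i) i" if "-r \<le> lo" "hi \<le> r" for lo hi
    proof
      fix t assume "t \<in> {lo..hi}"
      then have tr: "\<bar>t\<bar> \<le> r" using that by auto
      have "x - ((x - x0) \<bullet> i) *\<^sub>R i + t *\<^sub>R i \<in> B0" by (rule lineB[OF xB tr])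
      then have "y + t *\<^sub>R i \<in> B0" by (simp add: y_def a_def)
      then show "q/2 \<le> \<sigma> * Df (y + t *\<^sub>R i) i" using sDf inball by blast
    qed
    show ?thesis
    proof (cases "0 \<le> a")
      case True
      have p1: "\<forall>t\<in>{0..a}. q/2 \<le> \<sigma> * Df (y + t *\<^sub>R i) i" by (rule pos) (use ar True rpos in auto)
      have "q/2 * (a - 0) \<le> \<sigma> * f0 (y + a *\<^sub>R i) - \<sigma> * f0 (y + 0 *\<^sub>R i)"
        by (rule line_mono[OF der True p1])
      then have "q/2 * \<bar>a\<bar> \<le> \<sigma> * f0 x - \<sigma> * f0 y" using True by (simp only: yx) simp
      then show ?thesis using True by (simp add: a_def y_def)
    next
      case False
      have p1: "\<forall>t\<in>{a..0}. q/2 \<le> \<sigma> * Df (y + t *\<^sub>R i) i" by (rule pos) (use ar False rpos in auto)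
      have "q/2 * (0 - a) \<le> \<sigma> * f0 (y + 0 *\<^sub>R i) - \<sigma> * f0 (y + a *\<^sub>R i)"
        using False by (intro line_mono[OF der _ p1]) simp
      then have "q/2 * \<bar>a\<bar> \<le> \<sigma> * f0 y - \<sigma> * f0 x" using False by (simp only: yx) simp
      then show ?thesis using False by (simp add: a_def y_def)
    qed
  qed
  have lowhigh: "f0 x < c - q*r/16" if xB: "x \<in> B0" and lo: "\<sigma> * ((x - x0) \<bullet> i) \<le> -r/2" for x
  proof -
    define a where "a = (x - x0) \<bullet> i"
    define y where "y = x - a *\<^sub>R i"
    have ab: "r/2 \<le> \<bar>a\<bar>" using lo sg by (auto simp: a_def)
    have qa: "q/2*(r/2) \<le> q/2 * \<bar>a\<bar>" using qpos ab by (intro mult_left_mono) auto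
    have yc: "\<bar>f0 y - c\<bar> \<le> q*r/8" using yclose[OF xB] by (simp add: a_def y_def)
    have mx: "(0 \<le> a \<and> (q/2) * \<bar>a\<bar> \<le> \<sigma> * f0 x - \<sigma> * f0 y)
       \<or> (a \<le> 0 \<and> (q/2) * \<bar>a\<bar> \<le> \<sigma> * f0 y - \<sigma> * f0 x)"
      using mono_x[OF xB] by (simp add: a_def y_def)
    have qr: "0 < q*r" using qpos rpos by simp
    show ?thesis
    proof (cases "\<sigma> = 1")
      case True
      then have "a \<le> -r/2" using lo by (simp add: a_def)
      then have "(q/2) * \<bar>a\<bar> \<le> f0 y - f0 x" using mx True rpos by auto
      then show ?thesis using qa yc qr by linarith 
    next
      case False
      then have s1: "\<sigma> = -1" using sg by simp
      then have "r/2 \<le> a" using lo by (simp add: a_def)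
      then have "(q/2) * \<bar>a\<bar> \<le> f0 y - f0 x" using mx s1 rpos by auto
      then show ?thesis using qa yc qr by linarith
    qed
  qed
  have low: "f0 x < c - q*r/16" if "x \<in> B0" "\<sigma> * ((x - x0) \<bullet> i) \<le> -r/2" for x
    using lowhigh that by blast
  have high: "c + q*r/16 < f0 x" if xB: "x \<in> B0" and hi: "r/2 \<le> \<sigma> * ((x - x0) \<bullet> i)" for x
  proof -
    define a where "a = (x - x0) \<bullet> i"
    define y where "y = x - a *\<^sub>R i"
    have ab: "r/2 \<le> \<bar>a\<bar>" using hi sg by (auto simp: a_def)
    have qa: "q/2*(r/2) \<le> q/2 * \<bar>a\<bar>" using qpos ab by (intro mult_left_mono) auto
    have yc: "\<bar>f0 y - c\<bar> \<le> q*r/8" using yclose[OF xB] by (simp add: a_def y_def)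
    have mx: "(0 \<le> a \<and> (q/2) * \<bar>a\<bar> \<le> \<sigma> * f0 x - \<sigma> * f0 y)
       \<or> (a \<le> 0 \<and> (q/2) * \<bar>a\<bar> \<le> \<sigma> * f0 y - \<sigma> * f0 x)"
      using mono_x[OF xB] by (simp add: a_def y_def)
    have qr: "0 < q*r" using qpos rpos by simp
    show ?thesis
    proof (cases "\<sigma> = 1")
      case True
      then have "r/2 \<le> a" using hi by (simp add: a_def)
      then have "(q/2) * \<bar>a\<bar> \<le> f0 x - f0 y" using mx True rpos by auto
      then show ?thesis using qa yc qr by linarith
    next
      case False
      then have s1: "\<sigma> = -1" using sg by simp
      then have "a \<le> -r/2" using hi by (simp add: a_def)
      then have "(q/2) * \<bar>a\<bar> \<le> f0 x - f0 y" using mx s1 rpos by auto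
      then show ?thesis using qa yc qr by linarith
    qed
  qed
  define \<kappa> where "\<kappa> = (2*r')^(DIM('a) - 1) / (2*L)"
  have \<kappa>pos: "0 < \<kappa>" using r'pos Lpos by (simp add: \<kappa>_def)
  have Ameas: "{x\<in>B0. s \<le> f0 x \<and> f0 x < s + k} \<in> sets lborel"
    "emeasure lborel {x\<in>B0. s \<le> f0 x \<and> f0 x < s + k} < \<infinity>" for s k
  proof -
    have eq: "{x\<in>B0. s \<le> f0 x \<and> f0 x < s + k} = (B0 \<inter> {x. s \<le> f0 x}) \<inter> {x. f0 x < s + k}" by auto
    have "B0 \<in> sets lborel" unfolding B0_def by simp
    then show "{x\<in>B0. s \<le> f0 x \<and> f0 x < s + k} \<in> sets lborel"
      unfolding eq using meas_less_leb(3,4)[OF cont0] by blast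
    have "bounded {x\<in>B0. s \<le> f0 x \<and> f0 x < s + k}"
      by (rule bounded_subset[of B0]) (auto simp: B0_def)
    then show "emeasure lborel {x\<in>B0. s \<le> f0 x \<and> f0 x < s + k} < \<infinity>"
      by (rule emeasure_bounded_finite)
  qed
  have slab: "\<kappa> * k \<le> measure lborel {x\<in>B0. s \<le> f0 x \<and> f0 x < s + k}"
    if sc: "\<bar>s - c\<bar> \<le> q*r/16" and k: "0 < k" "k \<le> L*r/2" for s k
  proof -
    have t: "0 < k/L" "k/L \<le> r/2" using k Lpos by (auto simp: divide_le_eq mult.commute)
    have lo: "\<forall>x\<in>cbox (x0 - w) (x0 + w). \<sigma> * ((x - x0) \<bullet> i) \<le> -r/2 \<longrightarrow> f0 x < s"
    proof (intro ballI impI)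
      fix x assume "x \<in> cbox (x0 - w) (x0 + w)" "\<sigma> * ((x - x0) \<bullet> i) \<le> -r/2"
      then have "f0 x < c - q*r/16" using low unfolding B0_def by blast
      then show "f0 x < s" using sc by linarith
    qed
    have hi: "\<forall>x\<in>cbox (x0 - w) (x0 + w). r/2 \<le> \<sigma> * ((x - x0) \<bullet> i) \<longrightarrow> s \<le> f0 x"
    proof (intro ballI impI)
      fix x assume "x \<in> cbox (x0 - w) (x0 + w)" "r/2 \<le> \<sigma> * ((x - x0) \<bullet> i)"
      then have "c + q*r/16 < f0 x" using high unfolding B0_def by blast
      then show "s \<le> f0 x" using sc by linarith
    qed
    have "(k/L)/2 * (2*r')^(DIM('a) - 1)
           \<le> measure lebesgue {x\<in>cbox (x0 - w) (x0 + w). s \<le> f0 x \<and> f0 x < s + L*(k/L)}"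
      by (rule slab_box[OF i sg w rpos r'pos t cont0 Lip lo hi])
    moreover have "L*(k/L) = k" using Lpos by simp
    moreover have "(k/L)/2 * (2*r')^(DIM('a) - 1) = \<kappa> * k" by (simp add: \<kappa>_def mult.commute)
    ultimately have "\<kappa> * k \<le> measure lebesgue {x\<in>B0. s \<le> f0 x \<and> f0 x < s + k}"
      unfolding B0_def by simp
    then show ?thesis using Ameas(1) by simp
  qed
  define k0 where "k0 = min (q*r/16) (min (L*r/2) (c/2))"
  have k0pos: "0 < k0" using qpos rpos Lpos cpos by (simp add: k0_def)
  have Up: "Gf f0 (c + h) \<le> 1 - \<tau> - c*\<kappa>*h/2" if h: "0 < h" "h \<le> k0" for h
  proof -
    let ?A = "{x\<in>B0. c + h/2 \<le> f0 x \<and> f0 x < c + h/2 + h/2}"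
    have m: "\<kappa> * (h/2) \<le> measure lborel ?A"
      using h by (intro slab) (auto simp: k0_def)
    have "(c + h/2) * measure lborel ?A \<le> Gf f0 (c + h/2) - Gf f0 (c + h/2 + h/2)"
      using h c0 by (intro G_slab[OF dens0 _ _ Ameas]) (auto simp: less_imp_le)
    moreover have "Gf f0 (c + h/2 + h/2) = Gf f0 (c + h)" by (rule arg_cong[where f="Gf f0"]) simp
    moreover have "Gf f0 (c + h/2) \<le> 1 - \<tau>" using h by (intro P2) auto
    moreover have "c*\<kappa>*h/2 \<le> (c + h/2) * measure lborel ?A"
    proof -
      have "c*\<kappa>*h/2 = c * (\<kappa> * (h/2))" by simp
      also have "\<dots> \<le> c * measure lborel ?A" using m c0 by (intro mult_left_mono) auto
      also have "\<dots> \<le> (c + h/2) * measure lborel ?A" using h by (intro mult_right_mono) auto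
      finally show ?thesis .
    qed
    ultimately show ?thesis by linarith
  qed
  have Lw: "1 - \<tau> + c*\<kappa>*h/4 < Gf f0 (c - h)" if h: "0 < h" "h \<le> k0" for h
  proof -
    let ?A = "{x\<in>B0. c - h \<le> f0 x \<and> f0 x < c - h + h/2}"
    have m: "\<kappa> * (h/2) \<le> measure lborel ?A"
      using h by (intro slab) (auto simp: k0_def)
    have ch: "c/2 \<le> c - h" using h by (auto simp: k0_def)
    have "(c - h) * measure lborel ?A \<le> Gf f0 (c - h) - Gf f0 (c - h + h/2)"
      using h ch c0 by (intro G_slab[OF dens0 _ _ Ameas]) auto
    moreover have "Gf f0 (c - h + h/2) = Gf f0 (c - h/2)" by (rule arg_cong[where f="Gf f0"]) simp
    moreover have "1 - \<tau> < Gf f0 (c - h/2)" using h ch by (intro P1) auto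
    moreover have "c*\<kappa>*h/4 \<le> (c - h) * measure lborel ?A"
    proof -
      have "c*\<kappa>*h/4 = (c/2) * (\<kappa> * (h/2))" by simp
      also have "\<dots> \<le> (c - h) * measure lborel ?A" using m c0 ch \<kappa>pos h by (intro mult_mono) auto
      finally show ?thesis .
    qed
    ultimately show ?thesis by linarith
  qed
  define C where "C = 1 + 8/(c^2*\<kappa>)"
  define \<epsilon>0 where "\<epsilon>0 = k0 / (C - 1)"
  have C1pos: "0 < C - 1" using cpos \<kappa>pos by (simp add: C_def)
  have \<epsilon>0pos: "0 < \<epsilon>0" using k0pos C1pos by (simp add: \<epsilon>0_def)
  have main: "\<bar>level_tau \<tau> ft - c\<bar> \<le> C * \<epsilon>"
    if e: "0 < \<epsilon>" "\<epsilon> < \<epsilon>0" and ft: "prob_density ft" and close: "\<forall>x. \<bar>ft x - f0 x\<bar> \<le> \<epsilon>"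
    for \<epsilon> ft
  proof -
    define h where "h = (C - 1) * \<epsilon>"
    have hpos: "0 < h" using C1pos e by (simp add: h_def)
    have hk0: "h \<le> k0"
    proof -
      have "h < (C - 1) * \<epsilon>0" using e C1pos by (simp add: h_def)
      also have "\<dots> = k0" using C1pos by (simp add: \<epsilon>0_def)
      finally show ?thesis by simp
    qed
    have ckh: "c*\<kappa>*h = 8*\<epsilon>/c" using cpos \<kappa>pos by (simp add: h_def C_def field_simps power2_eq_square)
    have ch: "c/2 \<le> c - h" using hk0 by (simp add: k0_def)
    define Sft where "Sft = {y. 0 \<le> y \<and> Gf ft y \<le> 1 - \<tau>}"
    have lev: "level_tau \<tau> ft = Inf Sft" unfolding Sft_def level_Gf ..
    have bddft: "bdd_below Sft" unfolding Sft_def by (rule bdd_belowI[of _ 0]) auto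
    have upin: "c + C*\<epsilon> \<in> Sft"
    proof -
      have eq: "c + C*\<epsilon> - \<epsilon> = c + h" by (simp add: h_def algebra_simps)
      have "Gf ft (c + C*\<epsilon>) \<le> Gf f0 (c + C*\<epsilon> - \<epsilon>) + \<epsilon> / (c + C*\<epsilon> - \<epsilon>)"
        using cpos hpos by (intro G_E2[OF dens0 ft close]) (simp add: eq)
      also have "\<dots> = Gf f0 (c + h) + \<epsilon> / (c + h)" by (simp only: eq)
      also have "\<dots> \<le> 1 - \<tau> - c*\<kappa>*h/2 + \<epsilon> / c"
      proof -
        have "\<epsilon> / (c + h) \<le> \<epsilon> / c" using e cpos hpos by (intro divide_left_mono) auto
        then show ?thesis using Up[OF hpos hk0] by simp
      qed
      also have "\<dots> \<le> 1 - \<tau>"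
      proof -
        have "c*\<kappa>*h/2 = 4*\<epsilon>/c" using ckh by simp
        moreover have "0 \<le> \<epsilon>/c" using e cpos by simp
        ultimately show ?thesis by simp
      qed
      finally show ?thesis using cpos e C1pos by (auto simp: Sft_def intro!: add_nonneg_nonneg)
    qed
    have lower: "c - C*\<epsilon> \<le> y" if y: "y \<in> Sft" for y
    proof (rule ccontr)
      assume "\<not> c - C*\<epsilon> \<le> y"
      then have yl: "y \<le> c - C*\<epsilon>" by simp
      have eq: "c - C*\<epsilon> + \<epsilon> = c - h" by (simp add: h_def algebra_simps)
      have "Gf f0 (c - C*\<epsilon> + \<epsilon>) - \<epsilon> / (c - C*\<epsilon> + \<epsilon>) \<le> Gf ft (c - C*\<epsilon>)"
        using ch cpos by (intro G_E1[OF dens0 ft close]) (simp add: eq)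
      then have "Gf f0 (c - h) - \<epsilon> / (c - h) \<le> Gf ft (c - C*\<epsilon>)" by (simp only: eq)
      moreover have "Gf ft (c - C*\<epsilon>) \<le> Gf ft y" using yl by (rule G_mono[OF ft])
      moreover have "\<epsilon> / (c - h) \<le> 2*\<epsilon>/c"
      proof -
        have "\<epsilon> / (c - h) \<le> \<epsilon> / (c/2)" using e cpos ch by (intro divide_left_mono) auto
        also have "\<epsilon> / (c/2) = 2*\<epsilon>/c" by simp
        finally show ?thesis .
      qed
      moreover have "c*\<kappa>*h/4 = 2*\<epsilon>/c" using ckh by simp
      moreover have "Gf ft y \<le> 1 - \<tau>" using y by (simp add: Sft_def)
      ultimately show False using Lw[OF hpos hk0] by simp
    qed
    have "level_tau \<tau> ft \<le> c + C*\<epsilon>" unfolding lev by (rule cInf_lower[OF upin bddft])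
    moreover have "c - C*\<epsilon> \<le> level_tau \<tau> ft" unfolding lev using upin lower
      by (intro cInf_greatest) auto
    ultimately show ?thesis by (simp add: abs_le_iff)
  qed
  have C1: "1 \<le> C" using C1pos by simp
  show ?thesis unfolding c_def[symmetric]
    using C1 \<epsilon>0pos main by blast
qed

end
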